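(* Let $G$ be a two-player stage game with $|V_1^{m,p}|>1$ and $|V_2^{m,p}|>1$. If $G\in\mathcal{G}_{LS}^{m,m}$, then $G\in\mathcal{G}_{LS}^{m,p}$.
   Context: A two-player stage game $G$ has finite nonempty action sets $A_1,A_2$ and payoffs $u_1,u_2:A_1\times A_2\to\mathbb{R}$, extended to mixed strategies by expectation. $G(T)$ is the $T$-round repetition with realized actions observed each round and payoffs the expected sum of stage payoffs; an SPE of $G(T)$ is a strategy profile whose continuation after every history of length $k<T$ is a Nash equilibrium of $G(T-k)$. Regimes: pure-pure ($p,p$): both players restricted to actions (in the stage game and in every round, including deviations); mixed-pure ($m,p$): player 1 may mix, player 2 uses only actions; mixed-mixed ($m,m$): both may mix. For regime $r$, $\mathrm{Nash}^r(G)$ is the set of stage-game profiles available in $r$ from which no player can profitably deviate unilaterally to a strategy available in $r$, and $V_i^r=\{u_i(\sigma):\sigma\in\mathrm{Nash}^r(G)\}$. Locally suboptimal behavior occurs in an SPE $\mu$ of $G(T)$ (regime $r$) if for some history $h$ of length $k<T$, $(\mu_1(h),\mu_2(h))\notin\mathrm{Nash}^r(G)$. $\mathcal{G}_{LS}^r$ is the set of stage games $G$ for which there exist $T\ge1$ and an SPE of $G(T)$ in regime $r$ in which locally suboptimal behavior occurs. *)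

theory Defs
  imports Main "HOL-Library.Indicator_Function" Complex_Main
begin

text \<open>A two-player stage game: finite nonempty action sets A1, A2 and payoffs
u1, u2 :: 'a => 'b => real.\<close>

definition is_mixed :: "'a set \<Rightarrow> ('a \<Rightarrow> real) \<Rightarrow> bool" where
  "is_mixed A p \<longleftrightarrow> (\<forall>x. 0 \<le> p x) \<and> (\<forall>x. x \<notin> A \<longrightarrow> p x = 0) \<and> sum p A = 1"

definition point_mass :: "'a \<Rightarrow> 'a \<Rightarrow> real" where
  "point_mass a = (\<lambda>x. if x = a then 1 else 0)"

definition avail :: "bool \<Rightarrow> 'a set \<Rightarrow> ('a \<Rightarrow> real) set" where
  "avail mix A = (if mix then {p. is_mixed A p} else point_mass ` A)"

text \<open>A regime is a pair (player 1 may mix, player 2 may mix):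
(m,m) = (True,True), (m,p) = (True,False), (p,p) = (False,False).\<close>
type_synonym regime = "bool \<times> bool"

definition exp_pay :: "'a set \<Rightarrow> 'b set \<Rightarrow> ('a \<Rightarrow> 'b \<Rightarrow> real)
    \<Rightarrow> ('a \<Rightarrow> real) \<Rightarrow> ('b \<Rightarrow> real) \<Rightarrow> real" where
  "exp_pay A1 A2 u p q = (\<Sum>a\<in>A1. \<Sum>b\<in>A2. p a * q b * u a b)"

definition stage_nash :: "regime \<Rightarrow> 'a set \<Rightarrow> 'b set \<Rightarrow> ('a \<Rightarrow> 'b \<Rightarrow> real)
    \<Rightarrow> ('a \<Rightarrow> 'b \<Rightarrow> real) \<Rightarrow> (('a \<Rightarrow> real) \<times> ('b \<Rightarrow> real)) set" where
  "stage_nash r A1 A2 u1 u2 = {(p, q). p \<in> avail (fst r) A1 \<and> q \<in> avail (snd r) A2 \<and>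
      (\<forall>p'\<in>avail (fst r) A1. exp_pay A1 A2 u1 p' q \<le> exp_pay A1 A2 u1 p q) \<and>
      (\<forall>q'\<in>avail (snd r) A2. exp_pay A1 A2 u2 p q' \<le> exp_pay A1 A2 u2 p q)}"

definition nash_vals1 :: "regime \<Rightarrow> 'a set \<Rightarrow> 'b set \<Rightarrow> ('a \<Rightarrow> 'b \<Rightarrow> real)
    \<Rightarrow> ('a \<Rightarrow> 'b \<Rightarrow> real) \<Rightarrow> real set" where
  "nash_vals1 r A1 A2 u1 u2 = (\<lambda>(p, q). exp_pay A1 A2 u1 p q) ` stage_nash r A1 A2 u1 u2"

definition nash_vals2 :: "regime \<Rightarrow> 'a set \<Rightarrow> 'b set \<Rightarrow> ('a \<Rightarrow> 'b \<Rightarrow> real)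
    \<Rightarrow> ('a \<Rightarrow> 'b \<Rightarrow> real) \<Rightarrow> real set" where
  "nash_vals2 r A1 A2 u1 u2 = (\<lambda>(p, q). exp_pay A1 A2 u2 p q) ` stage_nash r A1 A2 u1 u2"

text \<open>Repeated game. Histories are lists of realized action profiles (oldest first).
A behaviour strategy maps histories to stage strategies available in the regime.\<close>
type_synonym ('a, 'b) hist = "('a \<times> 'b) list"

definition is_strategy :: "bool \<Rightarrow> 'x set \<Rightarrow> (('a, 'b) hist \<Rightarrow> 'x \<Rightarrow> real) \<Rightarrow> bool" where
  "is_strategy mix A \<sigma> \<longleftrightarrow> (\<forall>h. \<sigma> h \<in> avail mix A)"

definition valid_hist :: "'a set \<Rightarrow> 'b set \<Rightarrow> nat \<Rightarrow> ('a, 'b) hist \<Rightarrow> bool" where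
  "valid_hist A1 A2 T h \<longleftrightarrow> set h \<subseteq> A1 \<times> A2 \<and> length h < T"

fun cont_val :: "'a set \<Rightarrow> 'b set \<Rightarrow> ('a \<Rightarrow> 'b \<Rightarrow> real)
    \<Rightarrow> (('a, 'b) hist \<Rightarrow> 'a \<Rightarrow> real) \<Rightarrow> (('a, 'b) hist \<Rightarrow> 'b \<Rightarrow> real)
    \<Rightarrow> nat \<Rightarrow> ('a, 'b) hist \<Rightarrow> real" where
  "cont_val A1 A2 u \<sigma>1 \<sigma>2 0 h = 0"
| "cont_val A1 A2 u \<sigma>1 \<sigma>2 (Suc n) h =
     (\<Sum>a\<in>A1. \<Sum>b\<in>A2. \<sigma>1 h a * \<sigma>2 h b * (u a b + cont_val A1 A2 u \<sigma>1 \<sigma>2 n (h @ [(a, b)])))"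

definition is_SPE :: "regime \<Rightarrow> 'a set \<Rightarrow> 'b set \<Rightarrow> ('a \<Rightarrow> 'b \<Rightarrow> real)
    \<Rightarrow> ('a \<Rightarrow> 'b \<Rightarrow> real) \<Rightarrow> nat
    \<Rightarrow> (('a, 'b) hist \<Rightarrow> 'a \<Rightarrow> real) \<Rightarrow> (('a, 'b) hist \<Rightarrow> 'b \<Rightarrow> real) \<Rightarrow> bool" where
  "is_SPE r A1 A2 u1 u2 T \<sigma>1 \<sigma>2 \<longleftrightarrow>
     is_strategy (fst r) A1 \<sigma>1 \<and> is_strategy (snd r) A2 \<sigma>2 \<and>
     (\<forall>h. valid_hist A1 A2 T h \<longrightarrow>
        (\<forall>\<tau>1. is_strategy (fst r) A1 \<tau>1 \<longrightarrow>
           cont_val A1 A2 u1 \<tau>1 \<sigma>2 (T - length h) h \<le> cont_val A1 A2 u1 \<sigma>1 \<sigma>2 (T - length h) h) \<and>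
        (\<forall>\<tau>2. is_strategy (snd r) A2 \<tau>2 \<longrightarrow>
           cont_val A1 A2 u2 \<sigma>1 \<tau>2 (T - length h) h \<le> cont_val A1 A2 u2 \<sigma>1 \<sigma>2 (T - length h) h))"

definition locally_suboptimal :: "regime \<Rightarrow> 'a set \<Rightarrow> 'b set \<Rightarrow> ('a \<Rightarrow> 'b \<Rightarrow> real)
    \<Rightarrow> ('a \<Rightarrow> 'b \<Rightarrow> real) \<Rightarrow> nat
    \<Rightarrow> (('a, 'b) hist \<Rightarrow> 'a \<Rightarrow> real) \<Rightarrow> (('a, 'b) hist \<Rightarrow> 'b \<Rightarrow> real) \<Rightarrow> bool" where
  "locally_suboptimal r A1 A2 u1 u2 T \<sigma>1 \<sigma>2 \<longleftrightarrow>
     (\<exists>h. valid_hist A1 A2 T h \<and> (\<sigma>1 h, \<sigma>2 h) \<notin> stage_nash r A1 A2 u1 u2)"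

definition in_G_LS :: "regime \<Rightarrow> 'a set \<Rightarrow> 'b set \<Rightarrow> ('a \<Rightarrow> 'b \<Rightarrow> real)
    \<Rightarrow> ('a \<Rightarrow> 'b \<Rightarrow> real) \<Rightarrow> bool" where
  "in_G_LS r A1 A2 u1 u2 \<longleftrightarrow>
     (\<exists>T\<ge>1. \<exists>\<sigma>1 \<sigma>2. is_SPE r A1 A2 u1 u2 T \<sigma>1 \<sigma>2 \<and>
        locally_suboptimal r A1 A2 u1 u2 T \<sigma>1 \<sigma>2)"

end

theory Submission imports Defs begin

lemma pm_mixed: "finite A \<Longrightarrow> a \<in> A \<Longrightarrow> is_mixed A (point_mass a)"
  unfolding is_mixed_def point_mass_def by auto

lemma avail_mixed: "finite A \<Longrightarrow> p \<in> avail m A \<Longrightarrow> is_mixed A p"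
  unfolding avail_def by (auto split: if_splits intro: pm_mixed)

lemma pm_dsum: "finite A1 \<Longrightarrow> finite A2 \<Longrightarrow> a0 \<in> A1 \<Longrightarrow> b0 \<in> A2 \<Longrightarrow>
  (\<Sum>a\<in>A1. \<Sum>b\<in>A2. point_mass a0 a * point_mass b0 b * f a b) = f a0 b0"
proof -
  assume a: "finite A1" "finite A2" "a0 \<in> A1" "b0 \<in> A2"
  have e: "\<And>a b. point_mass a0 a * point_mass b0 b * f a b = (if a = a0 then (if b = b0 then f a b else 0) else 0)"
    by (simp add: point_mass_def)
  have i: "\<And>a. (\<Sum>b\<in>A2. (if a = a0 then (if b = b0 then f a b else 0) else 0)) = (if a = a0 then f a b0 else 0)"
    using a by auto
  show ?thesis unfolding e i using a by simp
qed

lemma exp_pm: "finite A1 \<Longrightarrow> finite A2 \<Longrightarrow> a0 \<in> A1 \<Longrightarrow> b0 \<in> A2 \<Longrightarrow>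
  exp_pay A1 A2 u (point_mass a0) (point_mass b0) = u a0 b0"
  unfolding exp_pay_def by (rule pm_dsum)

lemma dsum_const:
  assumes "is_mixed A1 p" "is_mixed A2 q" "finite A1" "finite A2"
  shows "(\<Sum>a\<in>A1. \<Sum>b\<in>A2. p a * q b * (f a b + c)) = (\<Sum>a\<in>A1. \<Sum>b\<in>A2. p a * q b * f a b) + c"
proof -
  have "(\<Sum>a\<in>A1. \<Sum>b\<in>A2. p a * q b * (f a b + c)) = (\<Sum>a\<in>A1. \<Sum>b\<in>A2. p a * q b * f a b) + (\<Sum>a\<in>A1. \<Sum>b\<in>A2. p a * q b * c)"
    by (simp add: distrib_left sum.distrib)
  also have "(\<Sum>a\<in>A1. \<Sum>b\<in>A2. p a * q b * c) = (\<Sum>a\<in>A1. p a * ((\<Sum>b\<in>A2. q b) * c))"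
    by (simp add: sum_distrib_left sum_distrib_right mult.assoc)
  also have "\<dots> = c" using assms by (simp add: is_mixed_def flip: sum_distrib_right)
  finally show ?thesis .
qed

lemma weighted_le:
  assumes "is_mixed A1 p" "is_mixed A2 q" "finite A1" "finite A2"
    and "\<And>a b. a \<in> A1 \<Longrightarrow> b \<in> A2 \<Longrightarrow> p a \<noteq> 0 \<Longrightarrow> q b \<noteq> 0 \<Longrightarrow> f a b \<le> C"
  shows "(\<Sum>a\<in>A1. \<Sum>b\<in>A2. p a * q b * f a b) \<le> C"
proof -
  have "(\<Sum>a\<in>A1. \<Sum>b\<in>A2. p a * q b * f a b) \<le> (\<Sum>a\<in>A1. \<Sum>b\<in>A2. p a * q b * (0 + C))"
  proof (intro sum_mono)
    fix a b assume ab: "a \<in> A1" "b \<in> A2"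
    show "p a * q b * f a b \<le> p a * q b * (0 + C)"
    proof (cases "p a = 0 \<or> q b = 0")
      case True thus ?thesis by auto
    next
      case False
      hence "f a b \<le> C" using assms(5) ab by auto
      moreover have "0 \<le> p a * q b" using assms(1,2) by (simp add: is_mixed_def)
      ultimately show ?thesis by (simp add: mult_left_mono)
    qed
  qed
  also have "\<dots> = C" using dsum_const[OF assms(1-4), of "\<lambda>_ _. 0" C] by simp
  finally show ?thesis .
qed

fun Wv :: "'a set \<Rightarrow> 'b set \<Rightarrow> ('a \<Rightarrow> 'b \<Rightarrow> real) \<Rightarrow> ('c \<Rightarrow> nat \<Rightarrow> 'a \<Rightarrow> real)
   \<Rightarrow> ('c \<Rightarrow> nat \<Rightarrow> 'b \<Rightarrow> real) \<Rightarrow> nat \<Rightarrow> 'c \<Rightarrow> nat \<Rightarrow> real" where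
  "Wv A1 A2 u F1 F2 0 c k = 0"
| "Wv A1 A2 u F1 F2 (Suc n) c k = exp_pay A1 A2 u (F1 c k) (F2 c k) + Wv A1 A2 u F1 F2 n c (Suc k)"

lemma Wv_add: "Wv A1 A2 u F1 F2 (n + m) c k = Wv A1 A2 u F1 F2 n c k + Wv A1 A2 u F1 F2 m c (k + n)"
  by (induction n arbitrary: k) auto

lemma Wv_const: "(\<And>j. k \<le> j \<Longrightarrow> j < k + n \<Longrightarrow> exp_pay A1 A2 u (F1 c j) (F2 c j) = v)
  \<Longrightarrow> Wv A1 A2 u F1 F2 n c k = real n * v"
proof (induction n arbitrary: k)
  case 0 thus ?case by simp
next
  case (Suc n)
  have "Wv A1 A2 u F1 F2 n c (Suc k) = real n * v" using Suc.prems by (intro Suc.IH) auto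
  moreover have "exp_pay A1 A2 u (F1 c k) (F2 c k) = v" using Suc.prems by auto
  ultimately show ?case by (simp add: algebra_simps)
qed

lemma cont_val_W:
  assumes fin: "finite A1" "finite A2"
    and s1: "\<And>h. h \<noteq> [] \<Longrightarrow> \<sigma>1 h = F1 (hd h) (length h)"
    and s2: "\<And>h. h \<noteq> [] \<Longrightarrow> \<sigma>2 h = F2 (hd h) (length h)"
    and m1: "\<And>c k. is_mixed A1 (F1 c k)" and m2: "\<And>c k. is_mixed A2 (F2 c k)"
  shows "h \<noteq> [] \<Longrightarrow> cont_val A1 A2 u \<sigma>1 \<sigma>2 n h = Wv A1 A2 u F1 F2 n (hd h) (length h)"
proof (induction n arbitrary: h)
  case 0 thus ?case by simp
next
  case (Suc n)
  have "cont_val A1 A2 u \<sigma>1 \<sigma>2 (Suc n) h = (\<Sum>a\<in>A1. \<Sum>b\<in>A2. F1 (hd h) (length h) a * F2 (hd h) (length h) b * (u a b + Wv A1 A2 u F1 F2 n (hd h) (Suc (length h))))"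
    using Suc by (simp add: s1 s2)
  also have "\<dots> = exp_pay A1 A2 u (F1 (hd h) (length h)) (F2 (hd h) (length h)) + Wv A1 A2 u F1 F2 n (hd h) (Suc (length h))"
    by (subst dsum_const[OF m1 m2 fin]) (simp add: exp_pay_def)
  finally show ?case by simp
qed

lemma dev1:
  assumes fin: "finite A1" "finite A2"
    and s1: "\<And>h. h \<noteq> [] \<Longrightarrow> \<sigma>1 h = F1 (hd h) (length h)"
    and s2: "\<And>h. h \<noteq> [] \<Longrightarrow> \<sigma>2 h = F2 (hd h) (length h)"
    and m1: "\<And>c k. is_mixed A1 (F1 c k)" and m2: "\<And>c k. is_mixed A2 (F2 c k)"
    and t: "\<And>h. \<tau>1 h \<in> avail m A1"
    and nash: "\<And>c k p'. p' \<in> avail m A1 \<Longrightarrow> exp_pay A1 A2 u p' (F2 c k) \<le> exp_pay A1 A2 u (F1 c k) (F2 c k)"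
  shows "h \<noteq> [] \<Longrightarrow> cont_val A1 A2 u \<tau>1 \<sigma>2 n h \<le> Wv A1 A2 u F1 F2 n (hd h) (length h)"
proof (induction n arbitrary: h)
  case 0 thus ?case by simp
next
  case (Suc n)
  have mt: "is_mixed A1 (\<tau>1 h)" using avail_mixed[OF fin(1) t] .
  have "cont_val A1 A2 u \<tau>1 \<sigma>2 (Suc n) h = (\<Sum>a\<in>A1. \<Sum>b\<in>A2. \<tau>1 h a * F2 (hd h) (length h) b * (u a b + cont_val A1 A2 u \<tau>1 \<sigma>2 n (h @ [(a, b)])))"
    using Suc by (simp add: s2)
  also have "\<dots> \<le> (\<Sum>a\<in>A1. \<Sum>b\<in>A2. \<tau>1 h a * F2 (hd h) (length h) b * (u a b + Wv A1 A2 u F1 F2 n (hd h) (Suc (length h))))"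
  proof (intro sum_mono mult_left_mono add_left_mono)
    fix a b
    show "cont_val A1 A2 u \<tau>1 \<sigma>2 n (h @ [(a, b)]) \<le> Wv A1 A2 u F1 F2 n (hd h) (Suc (length h))"
      using Suc.IH[of "h @ [(a,b)]"] Suc.prems by simp
    show "0 \<le> \<tau>1 h a * F2 (hd h) (length h) b" using mt m2[of "hd h" "length h"] by (simp add: is_mixed_def)
  qed
  also have "\<dots> = exp_pay A1 A2 u (\<tau>1 h) (F2 (hd h) (length h)) + Wv A1 A2 u F1 F2 n (hd h) (Suc (length h))"
    by (subst dsum_const[OF mt m2 fin]) (simp add: exp_pay_def)
  also have "\<dots> \<le> Wv A1 A2 u F1 F2 (Suc n) (hd h) (length h)"
    using nash[OF t] by simp
  finally show ?case .
qed

lemma dev2: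
  assumes fin: "finite A1" "finite A2"
    and s1: "\<And>h. h \<noteq> [] \<Longrightarrow> \<sigma>1 h = F1 (hd h) (length h)"
    and s2: "\<And>h. h \<noteq> [] \<Longrightarrow> \<sigma>2 h = F2 (hd h) (length h)"
    and m1: "\<And>c k. is_mixed A1 (F1 c k)" and m2: "\<And>c k. is_mixed A2 (F2 c k)"
    and t: "\<And>h. \<tau>2 h \<in> avail m A2"
    and nash: "\<And>c k q'. q' \<in> avail m A2 \<Longrightarrow> exp_pay A1 A2 u (F1 c k) q' \<le> exp_pay A1 A2 u (F1 c k) (F2 c k)"
  shows "h \<noteq> [] \<Longrightarrow> cont_val A1 A2 u \<sigma>1 \<tau>2 n h \<le> Wv A1 A2 u F1 F2 n (hd h) (length h)"
proof (induction n arbitrary: h)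
  case 0 thus ?case by simp
next
  case (Suc n)
  have mt: "is_mixed A2 (\<tau>2 h)" using avail_mixed[OF fin(2) t] .
  have "cont_val A1 A2 u \<sigma>1 \<tau>2 (Suc n) h = (\<Sum>a\<in>A1. \<Sum>b\<in>A2. F1 (hd h) (length h) a * \<tau>2 h b * (u a b + cont_val A1 A2 u \<sigma>1 \<tau>2 n (h @ [(a, b)])))"
    using Suc by (simp add: s1)
  also have "\<dots> \<le> (\<Sum>a\<in>A1. \<Sum>b\<in>A2. F1 (hd h) (length h) a * \<tau>2 h b * (u a b + Wv A1 A2 u F1 F2 n (hd h) (Suc (length h))))"
  proof (intro sum_mono mult_left_mono add_left_mono)
    fix a b
    show "cont_val A1 A2 u \<sigma>1 \<tau>2 n (h @ [(a, b)]) \<le> Wv A1 A2 u F1 F2 n (hd h) (Suc (length h))"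
      using Suc.IH[of "h @ [(a,b)]"] Suc.prems by simp
    show "0 \<le> F1 (hd h) (length h) a * \<tau>2 h b" using mt m1[of "hd h" "length h"] by (simp add: is_mixed_def)
  qed
  also have "\<dots> = exp_pay A1 A2 u (F1 (hd h) (length h)) (\<tau>2 h) + Wv A1 A2 u F1 F2 n (hd h) (Suc (length h))"
    by (subst dsum_const[OF m1 mt fin]) (simp add: exp_pay_def)
  also have "\<dots> \<le> Wv A1 A2 u F1 F2 (Suc n) (hd h) (length h)"
    using nash[OF t] by simp
  finally show ?case .
qed


lemma vals1_obtain:
  assumes "\<exists>x\<in>nash_vals1 r A1 A2 u1 u2. \<exists>y\<in>nash_vals1 r A1 A2 u1 u2. x \<noteq> y"
  shows "\<exists>L H. L \<in> stage_nash r A1 A2 u1 u2 \<and> H \<in> stage_nash r A1 A2 u1 u2 \<and>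
     exp_pay A1 A2 u1 (fst L) (snd L) < exp_pay A1 A2 u1 (fst H) (snd H)"
proof -
  obtain P Q where PQ: "P \<in> stage_nash r A1 A2 u1 u2" "Q \<in> stage_nash r A1 A2 u1 u2"
    "exp_pay A1 A2 u1 (fst P) (snd P) \<noteq> exp_pay A1 A2 u1 (fst Q) (snd Q)"
    using assms unfolding nash_vals1_def by (auto split: prod.splits)
  show ?thesis
  proof (cases "exp_pay A1 A2 u1 (fst P) (snd P) < exp_pay A1 A2 u1 (fst Q) (snd Q)")
    case True thus ?thesis using PQ by blast
  next
    case False thus ?thesis using PQ by (intro exI[of _ Q] exI[of _ P]) auto
  qed
qed

lemma vals2_obtain:
  assumes "\<exists>x\<in>nash_vals2 r A1 A2 u1 u2. \<exists>y\<in>nash_vals2 r A1 A2 u1 u2. x \<noteq> y"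
  shows "\<exists>L H. L \<in> stage_nash r A1 A2 u1 u2 \<and> H \<in> stage_nash r A1 A2 u1 u2 \<and>
     exp_pay A1 A2 u2 (fst L) (snd L) < exp_pay A1 A2 u2 (fst H) (snd H)"
proof -
  obtain P Q where PQ: "P \<in> stage_nash r A1 A2 u1 u2" "Q \<in> stage_nash r A1 A2 u1 u2"
    "exp_pay A1 A2 u2 (fst P) (snd P) \<noteq> exp_pay A1 A2 u2 (fst Q) (snd Q)"
    using assms unfolding nash_vals2_def by (auto split: prod.splits)
  show ?thesis
  proof (cases "exp_pay A1 A2 u2 (fst P) (snd P) < exp_pay A1 A2 u2 (fst Q) (snd Q)")
    case True thus ?thesis using PQ by blast
  next
    case False thus ?thesis using PQ by (intro exI[of _ Q] exI[of _ P]) auto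
  qed
qed

lemma pure_nonnash:
  assumes fin: "finite A1" "finite A2" and ne: "A1 \<noteq> {}" "A2 \<noteq> {}"
    and ls: "in_G_LS (True, True) A1 A2 u1 u2"
  shows "\<exists>a0\<in>A1. \<exists>b0\<in>A2. (point_mass a0, point_mass b0) \<notin> stage_nash (True, False) A1 A2 u1 u2"
proof (rule ccontr)
  assume "\<not> ?thesis"
  hence allN: "\<And>a b. a \<in> A1 \<Longrightarrow> b \<in> A2 \<Longrightarrow> (point_mass a, point_mass b) \<in> stage_nash (True, False) A1 A2 u1 u2"
    by blast
  have le1: "u1 a' b \<le> u1 a b" if "a \<in> A1" "a' \<in> A1" "b \<in> A2" for a a' b
  proof -
    have "point_mass a' \<in> avail True A1" using pm_mixed[OF fin(1) that(2)] by (simp add: avail_def)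
    hence "exp_pay A1 A2 u1 (point_mass a') (point_mass b) \<le> exp_pay A1 A2 u1 (point_mass a) (point_mass b)"
      using allN[OF that(1,3)] unfolding stage_nash_def by auto
    thus ?thesis using exp_pm fin that by metis
  qed
  have le2: "u2 a b' \<le> u2 a b" if "a \<in> A1" "b \<in> A2" "b' \<in> A2" for a b b'
  proof -
    have "point_mass b' \<in> avail False A2" using that by (simp add: avail_def)
    hence "exp_pay A1 A2 u2 (point_mass a) (point_mass b') \<le> exp_pay A1 A2 u2 (point_mass a) (point_mass b)"
      using allN[OF that(1,2)] unfolding stage_nash_def by auto
    thus ?thesis using exp_pm fin that by metis
  qed
  obtain as where as: "as \<in> A1" using ne by blast
  obtain bs where bs: "bs \<in> A2" using ne by blast
  have E1: "exp_pay A1 A2 u1 p q = (\<Sum>b\<in>A2. q b * u1 as b)" if "is_mixed A1 p" for p q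
  proof -
    have "exp_pay A1 A2 u1 p q = (\<Sum>a\<in>A1. \<Sum>b\<in>A2. p a * (q b * u1 as b))"
      unfolding exp_pay_def
    proof (intro sum.cong refl)
      fix a b assume "a \<in> A1" "b \<in> A2"
      hence "u1 a b = u1 as b" using le1 as by (meson order_antisym)
      thus "p a * q b * u1 a b = p a * (q b * u1 as b)" by simp
    qed
    also have "\<dots> = (\<Sum>a\<in>A1. p a) * (\<Sum>b\<in>A2. q b * u1 as b)"
      by (simp add: sum_product)
    finally show ?thesis using that by (simp add: is_mixed_def)
  qed
  have E2: "exp_pay A1 A2 u2 p q = (\<Sum>a\<in>A1. p a * u2 a bs)" if "is_mixed A2 q" for p q
  proof -
    have "exp_pay A1 A2 u2 p q = (\<Sum>a\<in>A1. \<Sum>b\<in>A2. (p a * u2 a bs) * q b)"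
      unfolding exp_pay_def
    proof (intro sum.cong refl)
      fix a b assume "a \<in> A1" "b \<in> A2"
      hence "u2 a b = u2 a bs" using le2 bs by (meson order_antisym)
      thus "p a * q b * u2 a b = (p a * u2 a bs) * q b" by simp
    qed
    also have "\<dots> = (\<Sum>a\<in>A1. p a * u2 a bs) * (\<Sum>b\<in>A2. q b)"
      by (simp add: sum_product)
    finally show ?thesis using that by (simp add: is_mixed_def)
  qed
  from ls obtain T \<sigma>1 \<sigma>2 h where spe: "is_SPE (True, True) A1 A2 u1 u2 T \<sigma>1 \<sigma>2"
    and nn: "(\<sigma>1 h, \<sigma>2 h) \<notin> stage_nash (True, True) A1 A2 u1 u2"
    unfolding in_G_LS_def locally_suboptimal_def by blast
  have a1: "\<sigma>1 h \<in> avail True A1" and a2: "\<sigma>2 h \<in> avail True A2"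
    using spe unfolding is_SPE_def is_strategy_def by auto
  have m1: "is_mixed A1 (\<sigma>1 h)" and m2: "is_mixed A2 (\<sigma>2 h)" using a1 a2 by (simp_all add: avail_def)
  have "(\<sigma>1 h, \<sigma>2 h) \<in> stage_nash (True, True) A1 A2 u1 u2"
    unfolding stage_nash_def using a1 a2 m1 m2 by (auto simp: E1 E2 avail_def)
  thus False using nn by blast
qed


theorem mainTheorem14:
  fixes A1 :: "'a set" and A2 :: "'b set" and u1 u2 :: "'a \<Rightarrow> 'b \<Rightarrow> real"
  assumes "finite A1" "A1 \<noteq> {}" "finite A2" "A2 \<noteq> {}"
    and "\<exists>x\<in>nash_vals1 (True, False) A1 A2 u1 u2. \<exists>y\<in>nash_vals1 (True, False) A1 A2 u1 u2. x \<noteq> y"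
    and "\<exists>x\<in>nash_vals2 (True, False) A1 A2 u1 u2. \<exists>y\<in>nash_vals2 (True, False) A1 A2 u1 u2. x \<noteq> y"
    and "in_G_LS (True, True) A1 A2 u1 u2"
  shows "in_G_LS (True, False) A1 A2 u1 u2"
proof -
  note fin = assms(1,3)
  define S where "S = stage_nash (True, False) A1 A2 u1 u2"
  define e1 where "e1 P = exp_pay A1 A2 u1 (fst P) (snd P)" for P :: "('a \<Rightarrow> real) \<times> ('b \<Rightarrow> real)"
  define e2 where "e2 P = exp_pay A1 A2 u2 (fst P) (snd P)" for P :: "('a \<Rightarrow> real) \<times> ('b \<Rightarrow> real)"
  obtain a0 b0 where a0: "a0 \<in> A1" and b0: "b0 \<in> A2" and nn: "(point_mass a0, point_mass b0) \<notin> S"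
    using pure_nonnash[OF fin assms(2,4,7)] S_def by blast
  obtain L1 H1 where LH1: "L1 \<in> S" "H1 \<in> S" "e1 L1 < e1 H1"
    using vals1_obtain[OF assms(5)] unfolding S_def e1_def by blast
  obtain L2 H2 where LH2: "L2 \<in> S" "H2 \<in> S" "e2 L2 < e2 H2"
    using vals2_obtain[OF assms(6)] unfolding S_def e2_def by blast
  define M1 where "M1 = (\<Sum>a\<in>A1. \<bar>u1 a b0 - u1 a0 b0\<bar>)"
  define M2 where "M2 = (\<Sum>b\<in>A2. \<bar>u2 a0 b - u2 a0 b0\<bar>)"
  obtain n :: nat where nbig: "M1 / (e1 H1 - e1 L1) + M2 / (e2 H2 - e2 L2) \<le> real n"
    using real_arch_simple by blast
  have M1nn: "0 \<le> M1" and M2nn: "0 \<le> M2" unfolding M1_def M2_def by (auto intro: sum_nonneg)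
  have d1: "0 < e1 H1 - e1 L1" and d2: "0 < e2 H2 - e2 L2" using LH1 LH2 by auto
  have "M1 / (e1 H1 - e1 L1) \<le> real n" using nbig M2nn d2 by (smt (verit) divide_nonneg_pos)
  hence n1: "M1 \<le> real n * (e1 H1 - e1 L1)" using d1 by (simp add: pos_divide_le_eq)
  have "M2 / (e2 H2 - e2 L2) \<le> real n" using nbig M1nn d1 by (smt (verit) divide_nonneg_pos)
  hence n2: "M2 \<le> real n * (e2 H2 - e2 L2)" using d2 by (simp add: pos_divide_le_eq)
  define Prof where "Prof c k = (if k \<le> n then (if fst c \<noteq> a0 then L1 else H1)
      else (if fst c = a0 \<and> snd c \<noteq> b0 then L2 else H2))" for c :: "'a \<times> 'b" and k :: nat
  define F1 where "F1 c k = fst (Prof c k)" for c k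
  define F2 where "F2 c k = snd (Prof c k)" for c k
  have ProfS: "Prof c k \<in> S" for c k using LH1 LH2 unfolding Prof_def by auto
  have F1a: "F1 c k \<in> avail True A1" for c k using ProfS[of c k] unfolding S_def stage_nash_def F1_def by auto
  have F2a: "F2 c k \<in> avail False A2" for c k using ProfS[of c k] unfolding S_def stage_nash_def F2_def by auto
  have m1: "is_mixed A1 (F1 c k)" for c k using avail_mixed[OF fin(1) F1a] .
  have m2: "is_mixed A2 (F2 c k)" for c k using avail_mixed[OF fin(2) F2a] .
  have nash1: "exp_pay A1 A2 u1 p' (F2 c k) \<le> exp_pay A1 A2 u1 (F1 c k) (F2 c k)" if "p' \<in> avail True A1" for c k p'
    using ProfS[of c k] that unfolding S_def stage_nash_def F1_def F2_def by auto
  have nash2: "exp_pay A1 A2 u2 (F1 c k) q' \<le> exp_pay A1 A2 u2 (F1 c k) (F2 c k)" if "q' \<in> avail False A2" for c k q'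
    using ProfS[of c k] that unfolding S_def stage_nash_def F1_def F2_def by auto
  define \<sigma>1 where "\<sigma>1 h = (if h = [] then point_mass a0 else F1 (hd h) (length h))" for h :: "('a, 'b) hist"
  define \<sigma>2 where "\<sigma>2 h = (if h = [] then point_mass b0 else F2 (hd h) (length h))" for h :: "('a, 'b) hist"
  have s1: "\<And>h. h \<noteq> [] \<Longrightarrow> \<sigma>1 h = F1 (hd h) (length h)" by (simp add: \<sigma>1_def)
  have s2: "\<And>h. h \<noteq> [] \<Longrightarrow> \<sigma>2 h = F2 (hd h) (length h)" by (simp add: \<sigma>2_def)
  have pa1: "point_mass a0 \<in> avail True A1" using pm_mixed[OF fin(1) a0] by (simp add: avail_def)
  have pa2: "point_mass b0 \<in> avail False A2" using b0 by (simp add: avail_def)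
  have st1: "is_strategy True A1 \<sigma>1" unfolding is_strategy_def \<sigma>1_def using pa1 F1a by auto
  have st2: "is_strategy False A2 \<sigma>2" unfolding is_strategy_def \<sigma>2_def using pa2 F2a by auto
  define T where "T = Suc (n + n)"
  define W1 where "W1 c = Wv A1 A2 u1 F1 F2 (n + n) c 1" for c
  define W2 where "W2 c = Wv A1 A2 u2 F1 F2 (n + n) c 1" for c
  have ep1: "exp_pay A1 A2 u1 (F1 c j) (F2 c j) = e1 (Prof c j)" for c j
    unfolding e1_def F1_def F2_def ..
  have ep2: "exp_pay A1 A2 u2 (F1 c j) (F2 c j) = e2 (Prof c j)" for c j
    unfolding e2_def F1_def F2_def ..
  have W1on: "W1 (a0, b0) = real n * e1 H1 + real n * e1 H2"
    unfolding W1_def Wv_add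
    by (intro arg_cong2[where f="(+)"] Wv_const) (auto simp: ep1 Prof_def)
  have W1dev: "W1 (a, b0) = real n * e1 L1 + real n * e1 H2" if "a \<noteq> a0" for a
    unfolding W1_def Wv_add
    by (intro arg_cong2[where f="(+)"] Wv_const) (use that in \<open>auto simp: ep1 Prof_def\<close>)
  have W2on: "W2 (a0, b0) = real n * e2 H1 + real n * e2 H2"
    unfolding W2_def Wv_add
    by (intro arg_cong2[where f="(+)"] Wv_const) (auto simp: ep2 Prof_def)
  have W2dev: "W2 (a0, b) = real n * e2 H1 + real n * e2 L2" if "b \<noteq> b0" for b
    unfolding W2_def Wv_add
    by (intro arg_cong2[where f="(+)"] Wv_const) (use that in \<open>auto simp: ep2 Prof_def\<close>)
  have cvW1: "cont_val A1 A2 u1 \<sigma>1 \<sigma>2 m h = Wv A1 A2 u1 F1 F2 m (hd h) (length h)" if "h \<noteq> []" for m h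
    using cont_val_W[where ?\<sigma>1.0=\<sigma>1 and ?\<sigma>2.0=\<sigma>2 and ?F1.0=F1 and ?F2.0=F2, OF fin s1 s2 m1 m2 that] .
  have cvW2: "cont_val A1 A2 u2 \<sigma>1 \<sigma>2 m h = Wv A1 A2 u2 F1 F2 m (hd h) (length h)" if "h \<noteq> []" for m h
    using cont_val_W[where ?\<sigma>1.0=\<sigma>1 and ?\<sigma>2.0=\<sigma>2 and ?F1.0=F1 and ?F2.0=F2, OF fin s1 s2 m1 m2 that] .
  have spe: "is_SPE (True, False) A1 A2 u1 u2 T \<sigma>1 \<sigma>2"
    unfolding is_SPE_def
  proof (intro conjI allI impI)
    show "is_strategy (fst (True, False)) A1 \<sigma>1" using st1 by simp
    show "is_strategy (snd (True, False)) A2 \<sigma>2" using st2 by simp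
    fix h :: "('a, 'b) hist" and \<tau>1 :: "('a, 'b) hist \<Rightarrow> 'a \<Rightarrow> real" and \<tau>2 :: "('a, 'b) hist \<Rightarrow> 'b \<Rightarrow> real"
    assume vh: "valid_hist A1 A2 T h"
    {
      assume t1: "is_strategy (fst (True, False)) A1 \<tau>1"
      hence t1': "\<And>h. \<tau>1 h \<in> avail True A1" by (simp add: is_strategy_def)
      show "cont_val A1 A2 u1 \<tau>1 \<sigma>2 (T - length h) h \<le> cont_val A1 A2 u1 \<sigma>1 \<sigma>2 (T - length h) h"
      proof (cases "h = []")
        case False
        show ?thesis using dev1[where ?\<sigma>1.0=\<sigma>1 and ?\<sigma>2.0=\<sigma>2 and ?F1.0=F1 and ?F2.0=F2, OF fin s1 s2 m1 m2 t1' nash1 False] cvW1[OF False] by simp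
      next
        case True
        define C where "C = u1 a0 b0 + W1 (a0, b0)"
        have "cont_val A1 A2 u1 \<tau>1 \<sigma>2 (T - length h) h = (\<Sum>a\<in>A1. \<Sum>b\<in>A2. \<tau>1 [] a * point_mass b0 b *
            (u1 a b + cont_val A1 A2 u1 \<tau>1 \<sigma>2 (n + n) [(a, b)]))"
          using True by (simp add: T_def \<sigma>2_def)
        also have "\<dots> \<le> C"
        proof (rule weighted_le[OF avail_mixed[OF fin(1) t1'] avail_mixed[OF fin(2) pa2] fin])
          fix a b assume ab: "a \<in> A1" "b \<in> A2" "point_mass b0 b \<noteq> 0"
          hence bb: "b = b0" by (simp add: point_mass_def split: if_splits)
          have "cont_val A1 A2 u1 \<tau>1 \<sigma>2 (n + n) [(a, b)] \<le> W1 (a, b)"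
            using dev1[where ?\<sigma>1.0=\<sigma>1 and ?\<sigma>2.0=\<sigma>2 and ?F1.0=F1 and ?F2.0=F2 and ?h="[(a,b)]" and ?n="n+n", OF fin s1 s2 m1 m2 t1' nash1] by (simp add: W1_def)
          moreover have "u1 a b0 + W1 (a, b0) \<le> C"
          proof (cases "a = a0")
            case True thus ?thesis by (simp add: C_def)
          next
            case False
            have "\<bar>u1 a b0 - u1 a0 b0\<bar> \<le> M1" unfolding M1_def
              by (rule member_le_sum[OF ab(1) _ fin(1)]) simp
            thus ?thesis using n1 False W1dev[OF False] W1on unfolding C_def
              by (simp add: algebra_simps)
          qed
          ultimately show "u1 a b + cont_val A1 A2 u1 \<tau>1 \<sigma>2 (n + n) [(a, b)] \<le> C" using bb by simp
        qed
        also have "C = cont_val A1 A2 u1 \<sigma>1 \<sigma>2 (T - length h) h"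
          using True by (simp add: T_def \<sigma>1_def \<sigma>2_def pm_dsum[OF fin a0 b0] cvW1 C_def W1_def)
        finally show ?thesis .
      qed
    }
    {
      assume t2: "is_strategy (snd (True, False)) A2 \<tau>2"
      hence t2': "\<And>h. \<tau>2 h \<in> avail False A2" by (simp add: is_strategy_def)
      show "cont_val A1 A2 u2 \<sigma>1 \<tau>2 (T - length h) h \<le> cont_val A1 A2 u2 \<sigma>1 \<sigma>2 (T - length h) h"
      proof (cases "h = []")
        case False
        show ?thesis using dev2[where ?\<sigma>1.0=\<sigma>1 and ?\<sigma>2.0=\<sigma>2 and ?F1.0=F1 and ?F2.0=F2, OF fin s1 s2 m1 m2 t2' nash2 False] cvW2[OF False] by simp
      next
        case True
        define C where "C = u2 a0 b0 + W2 (a0, b0)"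
        have "cont_val A1 A2 u2 \<sigma>1 \<tau>2 (T - length h) h = (\<Sum>a\<in>A1. \<Sum>b\<in>A2. point_mass a0 a * \<tau>2 [] b *
            (u2 a b + cont_val A1 A2 u2 \<sigma>1 \<tau>2 (n + n) [(a, b)]))"
          using True by (simp add: T_def \<sigma>1_def)
        also have "\<dots> \<le> C"
        proof (rule weighted_le[OF avail_mixed[OF fin(1) pa1] avail_mixed[OF fin(2) t2'] fin])
          fix a b assume ab: "a \<in> A1" "b \<in> A2" "point_mass a0 a \<noteq> 0"
          hence aa: "a = a0" by (simp add: point_mass_def split: if_splits)
          have "cont_val A1 A2 u2 \<sigma>1 \<tau>2 (n + n) [(a, b)] \<le> W2 (a, b)"
            using dev2[where ?\<sigma>1.0=\<sigma>1 and ?\<sigma>2.0=\<sigma>2 and ?F1.0=F1 and ?F2.0=F2 and ?h="[(a,b)]" and ?n="n+n", OF fin s1 s2 m1 m2 t2' nash2] by (simp add: W2_def)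
          moreover have "u2 a0 b + W2 (a0, b) \<le> C"
          proof (cases "b = b0")
            case True thus ?thesis by (simp add: C_def)
          next
            case False
            have "\<bar>u2 a0 b - u2 a0 b0\<bar> \<le> M2" unfolding M2_def
              by (rule member_le_sum[OF ab(2) _ fin(2)]) simp
            thus ?thesis using n2 False W2dev[OF False] W2on unfolding C_def
              by (simp add: algebra_simps)
          qed
          ultimately show "u2 a b + cont_val A1 A2 u2 \<sigma>1 \<tau>2 (n + n) [(a, b)] \<le> C" using aa by simp
        qed
        also have "C = cont_val A1 A2 u2 \<sigma>1 \<sigma>2 (T - length h) h"
          using True by (simp add: T_def \<sigma>1_def \<sigma>2_def pm_dsum[OF fin a0 b0] cvW2 C_def W2_def)
        finally show ?thesis .
      qed
    }
  qed
  have "locally_suboptimal (True, False) A1 A2 u1 u2 T \<sigma>1 \<sigma>2"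
    unfolding locally_suboptimal_def
    by (rule exI[of _ "[]"]) (use nn in \<open>simp add: valid_hist_def T_def \<sigma>1_def \<sigma>2_def S_def\<close>)
  thus ?thesis unfolding in_G_LS_def using spe T_def by auto
qed

end
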